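(* Let $k\ge2$ and let $G,H$ be graphs. Let $u,v$ be vertices belonging to the same $2$-connected component of $G$, and let $u',v'$ be vertices of $H$ that are not contained in a common $2$-connected component of $H$. Then $\chi^k_G(u,v)\ne\chi^k_H(u',v')$.
   Context: Graphs are finite, simple, undirected (possibly vertex- or arc-colored; uncolored graphs are monochromatic). A graph is $2$-connected if it has more than $2$ vertices and removing any single vertex leaves it connected. A $2$-connected component of $G$ is an inclusion-maximal set $S'\subseteq V(G)$ such that $G[S']$ is $2$-connected. For $k\ge2$, the $k$-dimensional Weisfeiler–Leman algorithm computes a coloring of $V(G)^k$: the initial color of a tuple consists of its input color and the isomorphism type of the ordered induced subgraph on its entries; in each round the new color of $\bar v$ is the pair of its old color and the multiset, over $w\in V(G)$, of the $k$-tuples whose $i$-th component is the old color of $\bar v$ with its $i$-th entry replaced by $w$; the stable coloring is $\chi^k_G$, with canonical colors comparable across graphs. For $\ell<k$, $\chi^k_G(u_1,\dots,u_\ell):=\chi^k_G(u_1,\dots,u_\ell,u_\ell,\dots,u_\ell)$ (last entry repeated $k-\ell$ times). *)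

theory Defs
  imports Main "HOL-Library.Multiset"
begin

text \<open>Finite simple undirected graphs with vertex colours and arc colours
  (colours on ordered pairs of adjacent vertices). Uncoloured graphs are
  those with constant colour functions.\<close>

record ('a, 'c) cgraph =
  verts :: "'a set"
  adj   :: "'a \<Rightarrow> 'a \<Rightarrow> bool"
  vcol  :: "'a \<Rightarrow> 'c"
  acol  :: "'a \<Rightarrow> 'a \<Rightarrow> 'c"

definition wf_graph :: "('a, 'c, 'z) cgraph_scheme \<Rightarrow> bool" where
  "wf_graph G \<longleftrightarrow> finite (verts G)
     \<and> (\<forall>x y. adj G x y \<longrightarrow> x \<in> verts G \<and> y \<in> verts G)
     \<and> (\<forall>x y. adj G x y \<longrightarrow> adj G y x)
     \<and> (\<forall>x. \<not> adj G x x)"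

definition edges_on :: "('a, 'c, 'z) cgraph_scheme \<Rightarrow> 'a set \<Rightarrow> ('a \<times> 'a) set" where
  "edges_on G S = {(x, y). x \<in> S \<and> y \<in> S \<and> adj G x y}"

definition connected_on :: "('a, 'c, 'z) cgraph_scheme \<Rightarrow> 'a set \<Rightarrow> bool" where
  "connected_on G S \<longleftrightarrow> (\<forall>x\<in>S. \<forall>y\<in>S. (x, y) \<in> (edges_on G S)\<^sup>*)"

definition two_connected_on :: "('a, 'c, 'z) cgraph_scheme \<Rightarrow> 'a set \<Rightarrow> bool" where
  "two_connected_on G S \<longleftrightarrow> card S > 2 \<and> (\<forall>x\<in>S. connected_on G (S - {x}))"

definition is_2cc :: "('a, 'c, 'z) cgraph_scheme \<Rightarrow> 'a set \<Rightarrow> bool" where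
  "is_2cc G S \<longleftrightarrow> S \<subseteq> verts G \<and> two_connected_on G S
     \<and> (\<forall>T. S \<subseteq> T \<and> T \<subseteq> verts G \<and> two_connected_on G T \<longrightarrow> T = S)"

text \<open>Canonical colours, comparable across graphs: an initial (atomic) colour,
  or a refined colour consisting of the old colour and a multiset of k-tuples
  (lists) of old colours.\<close>
datatype 'c wlcol =
    Init "'c list \<times> (bool \<times> bool \<times> 'c option) list list"
  | Refine "'c wlcol" "'c wlcol list multiset"

text \<open>Initial colour of a tuple: input (vertex) colours of the entries and the
  ordered isomorphism type of the induced subgraph (equalities, adjacencies and
  arc colours).\<close>
definition atp :: "('a, 'c, 'z) cgraph_scheme \<Rightarrow> 'a list \<Rightarrow> 'c list \<times> (bool \<times> bool \<times> 'c option) list list" where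
  "atp G t = (map (vcol G) t,
     map (\<lambda>x. map (\<lambda>y. (x = y, adj G x y, if adj G x y then Some (acol G x y) else None)) t) t)"

primrec wl_col :: "('a, 'c, 'z) cgraph_scheme \<Rightarrow> nat \<Rightarrow> nat \<Rightarrow> 'a list \<Rightarrow> 'c wlcol" where
  "wl_col G k 0 = (\<lambda>t. Init (atp G t))"
| "wl_col G k (Suc r) = (\<lambda>t. Refine (wl_col G k r t)
      (image_mset (\<lambda>w. map (\<lambda>i. wl_col G k r (t[i := w])) [0..<k]) (mset_set (verts G))))"

text \<open>Stable colour: the whole sequence of iterated colours (two tuples have the
  same stable colour iff they have the same colour after every round).\<close>
definition wl_stable :: "('a, 'c, 'z) cgraph_scheme \<Rightarrow> nat \<Rightarrow> 'a list \<Rightarrow> nat \<Rightarrow> 'c wlcol" where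
  "wl_stable G k t = (\<lambda>r. wl_col G k r t)"

definition wl_pair :: "('a, 'c, 'z) cgraph_scheme \<Rightarrow> nat \<Rightarrow> 'a \<Rightarrow> 'a \<Rightarrow> nat \<Rightarrow> 'c wlcol" where
  "wl_pair G k u v = wl_stable G k (u # replicate (k - 1) v)"

end

theory Submission
  imports Defs "HOL-Computational_Algebra.Formal_Power_Series"
begin

primrec avs :: "('a,'c,'z) cgraph_scheme \<Rightarrow> 'a set \<Rightarrow> nat \<Rightarrow> 'a \<Rightarrow> 'a \<Rightarrow> nat" where
  "avs X Z 0 a b = (if a = b \<and> a \<notin> Z then 1 else 0)"
| "avs X Z (Suc n) a b = (if a \<in> Z then 0 else (\<Sum>w\<in>verts X. if adj X a w then avs X Z n w b else 0))"

primrec fpz :: "('a,'c,'z) cgraph_scheme \<Rightarrow> 'a \<Rightarrow> nat \<Rightarrow> 'a \<Rightarrow> nat" where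
  "fpz X z 0 a = (if a = z then 1 else 0)"
| "fpz X z (Suc n) a = (if a = z then 0 else (\<Sum>w\<in>verts X. if adj X a w then fpz X z n w else 0))"

lemma decomp:
  "avs X {} n a b = avs X {z} n a b + (\<Sum>i\<le>n. fpz X z i a * avs X {} (n-i) z b)"
proof (induction n arbitrary: a)
  case 0
  then show ?case by auto
next
  case (Suc n)
  show ?case
  proof (cases "a = z")
    case True
    have "(\<Sum>i\<le>Suc n. fpz X z i a * avs X {} (Suc n - i) z b)
        = fpz X z 0 a * avs X {} (Suc n) z b + (\<Sum>i\<le>n. fpz X z (Suc i) a * avs X {} (Suc n - Suc i) z b)"
      by (subst sum.atMost_Suc_shift) simp
    also have "\<dots> = avs X {} (Suc n) a b" using True by simp
    finally show ?thesis using True by simp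
  next
    case False
    have "avs X {} (Suc n) a b = (\<Sum>w\<in>verts X. if adj X a w then avs X {z} n w b + (\<Sum>i\<le>n. fpz X z i w * avs X {} (n-i) z b) else 0)"
      by (simp add: Suc.IH cong: if_cong)
    also have "\<dots> = (\<Sum>w\<in>verts X. if adj X a w then avs X {z} n w b else 0)
        + (\<Sum>w\<in>verts X. \<Sum>i\<le>n. (if adj X a w then fpz X z i w else 0) * avs X {} (n-i) z b)"
      by (auto simp add: sum.distrib[symmetric] sum_distrib_left sum_distrib_right intro!: sum.cong)
    also have "(\<Sum>w\<in>verts X. \<Sum>i\<le>n. (if adj X a w then fpz X z i w else 0) * avs X {} (n-i) z b)
       = (\<Sum>i\<le>n. fpz X z (Suc i) a * avs X {} (Suc n - Suc i) z b)"
      using False by (subst sum.swap) (simp add: sum_distrib_right)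
    also have "\<dots> = (\<Sum>i\<le>Suc n. fpz X z i a * avs X {} (Suc n - i) z b)"
      using False by (simp only: sum.atMost_Suc_shift) simp
    finally show ?thesis using False by simp
  qed
qed

lemma avs_end: "b \<in> Z \<Longrightarrow> avs X Z n a b = 0"
  by (induction n arbitrary: a) (simp_all cong: if_cong)

definition Wf :: "('a,'c,'z) cgraph_scheme \<Rightarrow> 'a set \<Rightarrow> 'a \<Rightarrow> 'a \<Rightarrow> int fps" where
  "Wf X Z a b = Abs_fps (\<lambda>n. int (avs X Z n a b))"

definition Ff :: "('a,'c,'z) cgraph_scheme \<Rightarrow> 'a \<Rightarrow> 'a \<Rightarrow> int fps" where
  "Ff X z a = Abs_fps (\<lambda>n. int (fpz X z n a))"

lemma decomp_fps: "Wf X {} a b = Wf X {z} a b + Ff X z a * Wf X {} z b"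
  by (rule fps_ext) (simp add: Wf_def Ff_def fps_mult_nth atLeast0AtMost decomp[of X n a b z for n])

lemma decomp_fps2: "Wf X {} a z = Ff X z a * Wf X {} z z"
  using decomp_fps[of X a z z] by (simp add: Wf_def avs_end fps_zero_def)

lemma key_identity:
  "Wf X {} x y * Wf X {} z z = Wf X {z} x y * Wf X {} z z + Wf X {} x z * Wf X {} z y"
  by (subst decomp_fps[of X x y z], subst decomp_fps2[of X x z]) (simp add: algebra_simps)

lemma Wf_nz: "Wf X {} z z \<noteq> 0"
proof
  assume "Wf X {} z z = 0"
  then have "fps_nth (Wf X {} z z) 0 = 0" by simp
  then show False by (simp add: Wf_def)
qed

lemma av_transfer:
  assumes "\<And>n. avs X {} n x y = avs Y {} n x' y'"
    "\<And>n. avs X {} n z z = avs Y {} n z' z'"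
    "\<And>n. avs X {} n x z = avs Y {} n x' z'"
    "\<And>n. avs X {} n z y = avs Y {} n z' y'"
  shows "avs X {z} n x y = avs Y {z'} n x' y'"
proof -
  have e: "Wf X {} a b = Wf Y {} a' b'" if "\<And>n. avs X {} n a b = avs Y {} n a' b'" for a b a' b'
    using that by (simp add: Wf_def)
  have "Wf X {z} x y * Wf X {} z z = Wf Y {z'} x' y' * Wf X {} z z"
  proof -
    have "Wf X {z} x y * Wf X {} z z = Wf X {} x y * Wf X {} z z - Wf X {} x z * Wf X {} z y"
      using key_identity[of X x y z] by (simp add: algebra_simps)
    also have "\<dots> = Wf Y {} x' y' * Wf Y {} z' z' - Wf Y {} x' z' * Wf Y {} z' y'"
      using e[OF assms(1)] e[OF assms(2)] e[OF assms(3)] e[OF assms(4)] by simp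
    also have "\<dots> = Wf Y {z'} x' y' * Wf Y {} z' z'"
      using key_identity[of Y x' y' z'] by (simp add: algebra_simps)
    finally show ?thesis using e[OF assms(2)] by simp
  qed
  then have "Wf X {z} x y = Wf Y {z'} x' y'" using Wf_nz[of X z] by (simp add: e[OF assms(2)])
  then have "fps_nth (Wf X {z} x y) n = fps_nth (Wf Y {z'} x' y') n" by simp
  then show ?thesis by (simp add: Wf_def)
qed

lemma walks_right:
  assumes wf: "wf_graph X"
  shows "avs X {} (Suc n) a b = (\<Sum>w\<in>verts X. if adj X w b then avs X {} n a w else 0)"
proof (induction n arbitrary: a)
  case 0
  have fin: "finite (verts X)" using wf by (simp add: wf_graph_def)
  have adjv: "adj X p q \<Longrightarrow> p \<in> verts X \<and> q \<in> verts X" for p q using wf by (simp add: wf_graph_def)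
  have "(\<Sum>w\<in>verts X. if adj X a w then avs X {} 0 w b else 0) = (if adj X a b then 1 else (0::nat))"
  proof -
    have "(\<Sum>w\<in>verts X. if adj X a w then avs X {} 0 w b else 0) = (\<Sum>w\<in>verts X. if w = b then (if adj X a b then 1 else 0) else (0::nat))"
      by (rule sum.cong) auto
    also have "\<dots> = (if adj X a b then 1 else 0)" using fin adjv by (simp add: sum.delta)
    finally show ?thesis .
  qed
  moreover have "(\<Sum>w\<in>verts X. if adj X w b then avs X {} 0 a w else 0) = (if adj X a b then 1 else (0::nat))"
  proof -
    have "(\<Sum>w\<in>verts X. if adj X w b then avs X {} 0 a w else 0) = (\<Sum>w\<in>verts X. if a = w then (if adj X a b then 1 else 0) else (0::nat))"
      by (rule sum.cong) auto
    also have "\<dots> = (if adj X a b then 1 else 0)" using fin adjv by (simp add: sum.delta)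
    finally show ?thesis .
  qed
  ultimately show ?case by (simp only: avs.simps if_False empty_iff)
next
  case (Suc n)
  have "avs X {} (Suc (Suc n)) a b = (\<Sum>w\<in>verts X. if adj X a w then (\<Sum>v\<in>verts X. if adj X v b then avs X {} n w v else 0) else 0)"
    by (subst avs.simps(2), simp only: if_False empty_iff Suc.IH)
  also have "\<dots> = (\<Sum>w\<in>verts X. \<Sum>v\<in>verts X. if adj X v b then (if adj X a w then avs X {} n w v else 0) else 0)"
    by (auto intro!: sum.cong sum.neutral)
  also have "\<dots> = (\<Sum>v\<in>verts X. \<Sum>w\<in>verts X. if adj X v b then (if adj X a w then avs X {} n w v else 0) else 0)"
    by (rule sum.swap)
  also have "\<dots> = (\<Sum>v\<in>verts X. if adj X v b then avs X {} (Suc n) a v else 0)"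
    by (auto intro!: sum.cong)
  finally show ?case .
qed

lemma walks_sym:
  assumes wf: "wf_graph X"
  shows "avs X {} n a b = avs X {} n b a"
proof (induction n arbitrary: a b)
  case 0
  then show ?case by auto
next
  case (Suc n)
  have sy: "adj X p q = adj X q p" for p q using wf by (auto simp: wf_graph_def)
  have "avs X {} (Suc n) a b = (\<Sum>w\<in>verts X. if adj X a w then avs X {} n w b else 0)" by simp
  also have "\<dots> = (\<Sum>w\<in>verts X. if adj X w a then avs X {} n b w else 0)"
    using Suc.IH sy by (auto intro!: sum.cong)
  also have "\<dots> = avs X {} (Suc n) b a" using walks_right[OF wf] by simp
  finally show ?case .
qed

lemma avs_pos_rtrancl:
  assumes wf: "wf_graph X"
  shows "avs X Z n a b > 0 \<Longrightarrow> (a,b) \<in> (edges_on X (verts X - Z))\<^sup>* \<and> a \<notin> Z \<and> b \<notin> Z"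
proof (induction n arbitrary: a)
  case 0
  then show ?case by (auto split: if_splits)
next
  case (Suc n)
  have aZ: "a \<notin> Z" using Suc.prems by (auto split: if_splits)
  then have "0 < (\<Sum>w\<in>verts X. if adj X a w then avs X Z n w b else 0)" using Suc.prems by simp
  have "\<exists>w\<in>verts X. 0 < (if adj X a w then avs X Z n w b else 0)"
  proof (rule ccontr)
    assume "\<not> ?thesis"
    then have "(\<Sum>w\<in>verts X. if adj X a w then avs X Z n w b else 0) = 0"
      by (intro sum.neutral) auto
    with \<open>0 < (\<Sum>w\<in>verts X. if adj X a w then avs X Z n w b else 0)\<close> show False by simp
  qed
  then obtain w where w: "w \<in> verts X" "0 < (if adj X a w then avs X Z n w b else 0)" by blast
  then have aw: "adj X a w" and pw: "avs X Z n w b > 0" by (auto split: if_splits)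
  from Suc.IH[OF pw] have ih: "(w, b) \<in> (edges_on X (verts X - Z))\<^sup>*" "w \<notin> Z" "b \<notin> Z" by auto
  have "a \<in> verts X" using aw wf by (auto simp: wf_graph_def)
  then have "(a, w) \<in> edges_on X (verts X - Z)" using aw w ih aZ by (auto simp: edges_on_def)
  then show ?case using ih aZ by (meson converse_rtrancl_into_rtrancl)
qed

lemma rtrancl_avs_pos:
  assumes wf: "wf_graph X" and p: "(a,b) \<in> (edges_on X A)\<^sup>*" and A: "A \<subseteq> verts X - Z" and b: "b \<notin> Z"
  shows "\<exists>n. avs X Z n a b > 0"
  using p
proof (induction rule: converse_rtrancl_induct)
  case base
  then show ?case using b by (intro exI[of _ 0]) simp
next
  case (step a c)
  then obtain n where n: "avs X Z n c b > 0" by auto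
  have ac: "a \<in> A" "c \<in> A" "adj X a c" using step(1) by (auto simp: edges_on_def)
  have fin: "finite (verts X)" using wf by (simp add: wf_graph_def)
  have "(if adj X a c then avs X Z n c b else 0) \<le> (\<Sum>w\<in>verts X. if adj X a w then avs X Z n w b else 0)"
    by (rule member_le_sum) (use ac A fin in auto)
  then have "avs X Z (Suc n) a b > 0" using ac A n by auto
  then show ?case by blast
qed

lemma wl_down:
  "wl_col G k r s = wl_col H k r s' \<Longrightarrow> r' \<le> r \<Longrightarrow> wl_col G k r' s = wl_col H k r' s'"
proof (induction r)
  case 0
  then show ?case by simp
next
  case (Suc r)
  then show ?case by (cases "r' = Suc r") (auto simp: le_Suc_eq)
qed

lemma atp_facts:
  assumes "atp G s = atp H s'" "i < length s" "j < length s"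
  shows "length s' = length s" "(s!i = s!j) = (s'!i = s'!j)" "adj G (s!i) (s!j) = adj H (s'!i) (s'!j)"
proof -
  have l: "length s' = length s" using arg_cong[OF assms(1), of "\<lambda>p. length (fst p)"] by (simp add: atp_def)
  show "length s' = length s" by (rule l)
  have "(snd (atp G s)) ! i ! j = (snd (atp H s')) ! i ! j" using assms(1) by simp
  then have "(s!i = s!j) = (s'!i = s'!j) \<and> adj G (s!i) (s!j) = adj H (s'!i) (s'!j)"
    using assms l by (simp add: atp_def)
  then show "(s!i = s!j) = (s'!i = s'!j)" "adj G (s!i) (s!j) = adj H (s'!i) (s'!j)" by simp_all
qed

lemma msum_eq:
  assumes "image_mset F A = image_mset F' B"
    and "\<And>a b. a \<in># A \<Longrightarrow> b \<in># B \<Longrightarrow> F a = F' b \<Longrightarrow> g a = g' b"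
  shows "sum_mset (image_mset g A) = sum_mset (image_mset g' B)"
  using assms
proof (induction A arbitrary: B)
  case empty
  then show ?case by simp
next
  case (add a A)
  have "F a \<in># image_mset F' B" using add.prems(1) by (metis image_mset_add_mset union_single_eq_member)
  then obtain b where b: "b \<in># B" "F' b = F a" by auto
  have B: "B = add_mset b (B - {#b#})" using b(1) by simp
  have "image_mset F A = image_mset F' (B - {#b#})"
    using add.prems(1) B b(2) by (metis add_mset_remove_trivial image_mset_add_mset)
  have "sum_mset (image_mset g A) = sum_mset (image_mset g' (B - {#b#}))"
  proof (rule add.IH)
    show "image_mset F A = image_mset F' (B - {#b#})" by fact
    fix a' b' assume "a' \<in># A" "b' \<in># B - {#b#}" "F a' = F' b'"
    then show "g a' = g' b'" using add.prems(2)[of a' b'] by (auto dest: in_diffD)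
  qed
  moreover have "g a = g' b" using add.prems(2) b by auto
  ultimately show ?case by (subst B) simp
qed

lemma F_nth:
  assumes "map (\<lambda>i. wl_col G k r (s[i:=w])) [0..<k] = map (\<lambda>i. wl_col H k r (s'[i:=w'])) [0..<k]" "i < k"
  shows "wl_col G k r (s[i:=w]) = wl_col H k r (s'[i:=w'])"
  using arg_cong[OF assms(1), of "\<lambda>l. l ! i"] assms(2) by simp

lemma atp_of_eq:
  assumes "wl_col G k r s = wl_col H k r s'"
  shows "atp G s = atp H s'"
  using wl_down[OF assms, of 0] by simp

lemma walks_inv:
  assumes k: "2 \<le> k" and wfG: "wf_graph G" and wfH: "wf_graph H"
  shows "length s = k \<Longrightarrow> length s' = k \<Longrightarrow> wl_col G k r s = wl_col H k r s' \<Longrightarrow> n \<le> r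
     \<Longrightarrow> avs G {} n (s!0) (s!1) = avs H {} n (s'!0) (s'!1)"
proof (induction n arbitrary: r s s')
  case 0
  have "atp G s = atp H s'" using atp_of_eq[OF 0(3)] .
  from atp_facts(2)[OF this, of 0 1] 0 k show ?case by simp
next
  case (Suc n)
  then obtain r0 where r: "r = Suc r0" and nr: "n \<le> r0" by (cases r) auto
  have M: "image_mset (\<lambda>w. map (\<lambda>i. wl_col G k r0 (s[i:=w])) [0..<k]) (mset_set (verts G))
      = image_mset (\<lambda>w. map (\<lambda>i. wl_col H k r0 (s'[i:=w])) [0..<k]) (mset_set (verts H))"
    using Suc.prems(3) r by simp
  have finG: "finite (verts G)" using wfG by (simp add: wf_graph_def)
  have finH: "finite (verts H)" using wfH by (simp add: wf_graph_def)
  have "avs G {} (Suc n) (s!0) (s!1) = (\<Sum>w\<in>verts G. if adj G (s!0) w then avs G {} n w (s!1) else 0)" by (simp only: avs.simps if_False empty_iff)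
  also have "\<dots> = sum_mset (image_mset (\<lambda>w. if adj G (s!0) w then avs G {} n w (s!1) else 0) (mset_set (verts G)))"
    by (rule sum_unfold_sum_mset)
  also have "\<dots> = sum_mset (image_mset (\<lambda>w. if adj H (s'!0) w then avs H {} n w (s'!1) else 0) (mset_set (verts H)))"
  proof (rule msum_eq[OF M])
    fix w w' assume ww: "map (\<lambda>i. wl_col G k r0 (s[i:=w])) [0..<k] = map (\<lambda>i. wl_col H k r0 (s'[i:=w'])) [0..<k]"
    have e0: "wl_col G k r0 (s[0:=w]) = wl_col H k r0 (s'[0:=w'])" using F_nth[OF ww] k by simp
    have e1: "wl_col G k r0 (s[1:=w]) = wl_col H k r0 (s'[1:=w'])" using F_nth[OF ww] k by simp
    have "avs G {} n (s[0:=w]!0) (s[0:=w]!1) = avs H {} n (s'[0:=w']!0) (s'[0:=w']!1)"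
      using Suc.IH[OF _ _ e0 nr] Suc.prems by simp
    then have a1: "avs G {} n w (s!1) = avs H {} n w' (s'!1)" using Suc.prems k by simp
    have "adj G (s[1:=w]!0) (s[1:=w]!1) = adj H (s'[1:=w']!0) (s'[1:=w']!1)"
      using atp_facts(3)[OF atp_of_eq[OF e1], of 0 1] Suc.prems k by simp
    then have a2: "adj G (s!0) w = adj H (s'!0) w'" using Suc.prems k by simp
    show "(if adj G (s!0) w then avs G {} n w (s!1) else 0) = (if adj H (s'!0) w' then avs H {} n w' (s'!1) else 0)"
      using a1 a2 by simp
  qed
  also have "\<dots> = (\<Sum>w\<in>verts H. if adj H (s'!0) w then avs H {} n w (s'!1) else 0)"
    by (rule sum_unfold_sum_mset[symmetric])
  finally show ?case by (simp only: avs.simps if_False empty_iff)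
qed

definition eqv :: "('a,'c,'z) cgraph_scheme \<Rightarrow> ('b,'c,'y) cgraph_scheme \<Rightarrow> nat \<Rightarrow> 'a list \<Rightarrow> 'b list \<Rightarrow> bool" where
  "eqv G H k s s' \<longleftrightarrow> (\<forall>r. wl_col G k r s = wl_col H k r s')"

lemma eqv_sym: "eqv G H k s s' \<Longrightarrow> eqv H G k s' s"
  by (simp add: eqv_def)

lemma back_move:
  assumes finG: "finite (verts G)" and finH: "finite (verts H)" and e: "eqv G H k s s'" and w': "w' \<in> verts H"
  shows "\<exists>w\<in>verts G. \<forall>i<k. eqv G H k (s[i:=w]) (s'[i:=w'])"
proof -
  define P where "P r w \<longleftrightarrow> (\<forall>i<k. wl_col G k r (s[i:=w]) = wl_col H k r (s'[i:=w']))" for r w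
  have ex: "\<exists>w\<in>verts G. P r w" for r
  proof -
    have M: "image_mset (\<lambda>w. map (\<lambda>i. wl_col G k r (s[i:=w])) [0..<k]) (mset_set (verts G))
      = image_mset (\<lambda>w. map (\<lambda>i. wl_col H k r (s'[i:=w])) [0..<k]) (mset_set (verts H))"
      using e unfolding eqv_def by (metis wl_col.simps(2) wlcol.inject(2))
    have "map (\<lambda>i. wl_col H k r (s'[i:=w'])) [0..<k] \<in># image_mset (\<lambda>w. map (\<lambda>i. wl_col H k r (s'[i:=w])) [0..<k]) (mset_set (verts H))"
      using w' finH by (simp, intro image_eqI[where x=w']) simp_all
    then obtain w where "w \<in># mset_set (verts G)" "map (\<lambda>i. wl_col G k r (s[i:=w])) [0..<k] = map (\<lambda>i. wl_col H k r (s'[i:=w'])) [0..<k]"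
      unfolding M[symmetric] by auto
    then show ?thesis using finG F_nth unfolding P_def by (metis elem_mset_set)
  qed
  have down: "P r w \<Longrightarrow> r' \<le> r \<Longrightarrow> P r' w" for r r' w
    unfolding P_def using wl_down by blast
  have "\<exists>w\<in>verts G. \<forall>r. P r w"
  proof (rule ccontr)
    assume "\<not> ?thesis"
    then have "\<forall>w\<in>verts G. \<exists>r. \<not> P r w" by blast
    then obtain R where R: "\<And>w. w \<in> verts G \<Longrightarrow> \<not> P (R w) w" by metis
    define m where "m = Max (R ` verts G)"
    obtain w0 where w0: "w0 \<in> verts G" "P m w0" using ex by blast
    have "R w0 \<le> m" unfolding m_def using finG w0(1) by simp
    then have "P (R w0) w0" using down w0(2) by blast
    then show False using R w0(1) by blast
  qed
  then show ?thesis unfolding P_def eqv_def by blast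
qed

lemma forth_move:
  assumes finG: "finite (verts G)" and finH: "finite (verts H)" and e: "eqv G H k s s'" and w: "w \<in> verts G"
  shows "\<exists>w'\<in>verts H. \<forall>i<k. eqv G H k (s[i:=w]) (s'[i:=w'])"
  using back_move[OF finH finG eqv_sym[OF e] w] eqv_sym by blast

lemma eqv_walks:
  assumes "2 \<le> k" "wf_graph G" "wf_graph H" "length s = k" "length s' = k" "eqv G H k s s'"
  shows "avs G {} n (s!0) (s!1) = avs H {} n (s'!0) (s'!1)"
  using walks_inv[OF assms(1-3) assms(4,5), of n n] assms(6) by (simp add: eqv_def)

lemma eqv_atp:
  assumes "eqv G H k s s'" "i < length s" "j < length s"
  shows "length s' = length s" "(s!i = s!j) = (s'!i = s'!j)" "adj G (s!i) (s!j) = adj H (s'!i) (s'!j)"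
  using atp_facts[OF atp_of_eq assms(2,3)] assms(1) unfolding eqv_def by blast+



lemma succ_take: "successively P xs \<Longrightarrow> successively P (take n xs)"
  using successively_append_iff[of P "take n xs" "drop n xs"] by simp

lemma succ_drop: "successively P xs \<Longrightarrow> successively P (drop n xs)"
  using successively_append_iff[of P "take n xs" "drop n xs"] by simp

lemma walk_rtrancl:
  "successively (adj X) xs \<Longrightarrow> xs \<noteq> [] \<Longrightarrow> set xs \<subseteq> A \<Longrightarrow> (hd xs, last xs) \<in> (edges_on X A)\<^sup>*"
proof (induction xs)
  case Nil
  then show ?case by simp
next
  case (Cons a xs)
  show ?case
  proof (cases "xs = []")
    case True
    then show ?thesis by simp
  next
    case False
    have "adj X a (hd xs)" "successively (adj X) xs" using Cons.prems False by (simp_all add: successively_Cons)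
    moreover have "a \<in> A" "hd xs \<in> A" using Cons.prems False by auto
    ultimately have "(a, hd xs) \<in> edges_on X A" by (simp add: edges_on_def)
    moreover have "(hd xs, last xs) \<in> (edges_on X A)\<^sup>*" using Cons False \<open>successively (adj X) xs\<close> by auto
    ultimately show ?thesis using False by (simp add: converse_rtrancl_into_rtrancl)
  qed
qed

lemma rtrancl_walk0:
  assumes "(a,b) \<in> (edges_on X A)\<^sup>*" "a \<in> A"
  shows "\<exists>xs. xs \<noteq> [] \<and> hd xs = a \<and> last xs = b \<and> successively (adj X) xs \<and> set xs \<subseteq> A"
  using assms(1)
proof (induction rule: rtrancl_induct)
  case base
  then show ?case using assms(2) by (intro exI[of _ "[a]"]) simp
next
  case (step y z)
  then obtain xs where xs: "xs \<noteq> []" "hd xs = a" "last xs = y" "successively (adj X) xs" "set xs \<subseteq> A" by blast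
  have yz: "adj X y z" "z \<in> A" using step(2) by (auto simp: edges_on_def)
  show ?case using xs yz by (intro exI[of _ "xs @ [z]"]) (simp add: successively_append_iff)
qed

lemma distinct_walk:
  "successively R xs \<Longrightarrow> xs \<noteq> [] \<Longrightarrow> \<exists>ys. successively R ys \<and> ys \<noteq> [] \<and> hd ys = hd xs \<and> last ys = last xs \<and> set ys \<subseteq> set xs \<and> distinct ys"
proof (induction "length xs" arbitrary: xs rule: less_induct)
  case less
  show ?case
  proof (cases "distinct xs")
    case True
    then show ?thesis using less.prems by blast
  next
    case False
    then obtain p q r y where d: "xs = p @ [y] @ q @ [y] @ r" using not_distinct_decomp by blast
    define zs where "zs = p @ [y] @ r"
    have s1: "successively R (p @ [y])" using less.prems(1) d
      using successively_append_iff[of R "p @ [y]" "q @ [y] @ r"] by simp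
    have s2: "successively R ([y] @ r)" using less.prems(1) d
      using successively_append_iff[of R "p @ [y] @ q" "[y] @ r"] by simp
    have sz: "successively R zs" using s1 s2 unfolding zs_def
      using successively_append_iff[of R "p @ [y]" r]
      by (cases r) (auto simp: successively_append_iff successively_Cons)
    have "length zs < length xs" using d zs_def by simp
    moreover have "zs \<noteq> []" by (simp add: zs_def)
    ultimately obtain ys where ys: "successively R ys" "ys \<noteq> []" "hd ys = hd zs" "last ys = last zs" "set ys \<subseteq> set zs" "distinct ys"
      using less.hyps sz by blast
    have "hd zs = hd xs" using d zs_def by (cases p) auto
    moreover have "last zs = last xs" using d zs_def by (cases r rule: rev_cases) auto
    moreover have "set zs \<subseteq> set xs" using d zs_def by auto
    ultimately show ?thesis using ys by (metis order_trans)
  qed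
qed

lemma rtrancl_walk:
  assumes "(a,b) \<in> (edges_on X A)\<^sup>*" "a \<in> A"
  shows "\<exists>xs. xs \<noteq> [] \<and> hd xs = a \<and> last xs = b \<and> successively (adj X) xs \<and> set xs \<subseteq> A \<and> distinct xs"
proof -
  obtain xs where xs: "xs \<noteq> []" "hd xs = a" "last xs = b" "successively (adj X) xs" "set xs \<subseteq> A"
    using rtrancl_walk0[OF assms] by blast
  from distinct_walk[OF xs(4) xs(1)] xs show ?thesis by (metis order_trans)
qed

lemma edges_sym: "wf_graph X \<Longrightarrow> sym (edges_on X A)"
  by (auto simp: sym_def edges_on_def wf_graph_def)

lemma rt_sym: "wf_graph X \<Longrightarrow> (a,b) \<in> (edges_on X A)\<^sup>* \<Longrightarrow> (b,a) \<in> (edges_on X A)\<^sup>*"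
  using sym_rtrancl[OF edges_sym] by (meson symD)

lemma edges_mono: "A \<subseteq> B \<Longrightarrow> (edges_on X A)\<^sup>* \<subseteq> (edges_on X B)\<^sup>*"
  by (rule rtrancl_mono) (auto simp: edges_on_def)

lemma connected_hub:
  assumes wf: "wf_graph X" and cB: "connected_on X B" and BA: "B \<subseteq> A" and Bne: "B \<noteq> {}"
    and reach: "\<And>p. p \<in> A \<Longrightarrow> \<exists>b\<in>B. (p,b) \<in> (edges_on X A)\<^sup>*"
  shows "connected_on X A"
  unfolding connected_on_def
proof (intro ballI)
  fix p q assume pq: "p \<in> A" "q \<in> A"
  obtain b1 where b1: "b1 \<in> B" "(p,b1) \<in> (edges_on X A)\<^sup>*" using reach pq(1) by blast
  obtain b2 where b2: "b2 \<in> B" "(q,b2) \<in> (edges_on X A)\<^sup>*" using reach pq(2) by blast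
  have "(b1,b2) \<in> (edges_on X B)\<^sup>*" using cB b1 b2 by (simp add: connected_on_def)
  then have "(b1,b2) \<in> (edges_on X A)\<^sup>*" using edges_mono[OF BA] by blast
  moreover have "(b2,q) \<in> (edges_on X A)\<^sup>*" using rt_sym[OF wf b2(2)] .
  ultimately show "(p,q) \<in> (edges_on X A)\<^sup>*" using b1(2) by (meson rtrancl_trans)
qed

definition tcc :: "('a,'c,'z) cgraph_scheme \<Rightarrow> 'a set \<Rightarrow> bool" where
  "tcc X T \<longleftrightarrow> (\<forall>c. connected_on X (T - {c}))"

lemma ear:
  assumes wf: "wf_graph X" and T: "tcc X T" and a: "a \<in> T" and b: "b \<in> T" and ab: "a \<noteq> b"
    and ps: "ps \<noteq> []" "distinct ps" "set ps \<inter> T = {}" and w: "successively (adj X) (a # ps @ [b])"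
  shows "tcc X (T \<union> set ps)"
  unfolding tcc_def
proof
  fix c
  define A where "A = (T \<union> set ps) - {c}"
  define B where "B = T - {c}"
  show "connected_on X A"
  proof (rule connected_hub[OF wf, of B])
    show "connected_on X B" using T by (simp add: tcc_def B_def)
    show "B \<subseteq> A" by (auto simp: A_def B_def)
    show "B \<noteq> {}" using a b ab by (auto simp: B_def)
    fix p assume pA: "p \<in> A"
    show "\<exists>b\<in>B. (p, b) \<in> (edges_on X A)\<^sup>*"
    proof (cases "p \<in> T")
      case True
      then show ?thesis using pA by (auto simp: A_def B_def)
    next
      case False
      then obtain i where i: "i < length ps" "p = ps ! i" using pA by (auto simp: A_def in_set_conv_nth)
      have pc: "p \<noteq> c" using pA by (simp add: A_def)
      show ?thesis
      proof (cases "c \<notin> set (take (Suc i) ps) \<and> c \<noteq> a")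
        case True
        define xs where "xs = a # take (Suc i) ps"
        have "xs = take (Suc (Suc i)) (a # ps @ [b])" using i by (simp add: xs_def)
        then have sx: "successively (adj X) xs" using succ_take[OF w, of "Suc (Suc i)"] by metis
        have "last xs = p" using i by (simp add: xs_def take_Suc_conv_app_nth)
        moreover have "set xs \<subseteq> A" using True a by (auto simp: xs_def A_def dest: in_set_takeD)
        ultimately have "(a, p) \<in> (edges_on X A)\<^sup>*" using walk_rtrancl[OF sx] by (simp add: xs_def)
        then have "(p, a) \<in> (edges_on X A)\<^sup>*" using rt_sym[OF wf] by blast
        moreover have "a \<in> B" using True a by (auto simp add: B_def)
        ultimately show ?thesis by blast
      next
        case False
        define xs where "xs = drop i ps @ [b]"
        have "xs = drop (Suc i) (a # ps @ [b])" using i by (simp add: xs_def)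
        then have sx: "successively (adj X) xs" using succ_drop[OF w, of "Suc i"] by metis
        have hx: "hd xs = p" using i by (simp add: xs_def hd_drop_conv_nth)
        have cnot: "c \<notin> set (drop i ps)"
        proof
          assume cd: "c \<in> set (drop i ps)"
          show False
          proof (cases "c = a")
            case True
            then show False using cd a ps(3) by (auto dest: in_set_dropD)
          next
            case ca: False
            then have "c \<in> set (take (Suc i) ps)" using False by simp
            moreover have "c \<noteq> ps ! i" using pc i by simp
            ultimately have "c \<in> set (take i ps)" using i by (auto simp: take_Suc_conv_app_nth)
            then show False using cd set_take_disj_set_drop_if_distinct[OF ps(2), of i i] by auto
          qed
        qed
        have bc: "b \<noteq> c"
        proof
          assume "b = c"
          then have "c \<in> T" using b by simp
          then have "c = a" using False ps(3) by (auto dest: in_set_takeD)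
          then show False using ab \<open>b = c\<close> by simp
        qed
        have "set xs \<subseteq> A" using cnot bc b by (auto simp: xs_def A_def dest: in_set_dropD)
        then have "(p, b) \<in> (edges_on X A)\<^sup>*" using walk_rtrancl[OF sx] hx by (simp add: xs_def)
        moreover have "b \<in> B" using bc b by (simp add: B_def)
        ultimately show ?thesis by blast
      qed
    qed
  qed
qed

lemma ear_step:
  assumes wf: "wf_graph X" and T: "tcc X T" and TV: "T \<subseteq> verts X" and c: "c \<in> T" and d: "d \<notin> T"
    and cd: "adj X c d" and p: "(d,b0) \<in> (edges_on X (verts X - {c}))\<^sup>*" and b0: "b0 \<in> T" "b0 \<noteq> c"
  shows "\<exists>T'. T \<subseteq> T' \<and> T' \<subseteq> verts X \<and> tcc X T' \<and> d \<in> T'"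
proof -
  have dV: "d \<in> verts X - {c}" using cd wf by (auto simp: wf_graph_def)
  obtain qs where qs: "qs \<noteq> []" "hd qs = d" "last qs = b0" "successively (adj X) qs" "set qs \<subseteq> verts X - {c}" "distinct qs"
    using rtrancl_walk[OF p dV] by blast
  define P where "P = (\<lambda>v. v \<notin> T)"
  define ps where "ps = takeWhile P qs"
  define rs where "rs = dropWhile P qs"
  have qsplit: "qs = ps @ rs" by (simp add: ps_def rs_def)
  have "last qs \<in> set qs" using qs(1) by simp
  then have rsne: "rs \<noteq> []" using qs(3) b0 by (auto simp: rs_def P_def)
  define b where "b = hd rs"
  have bT: "b \<in> T" using hd_dropWhile[of P qs] rsne by (simp add: b_def rs_def P_def)
  have "b \<in> set qs" using rsne qsplit b_def by (metis Un_iff hd_in_set set_append)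
  then have bc: "b \<noteq> c" using qs(5) by auto
  obtain q0 qt where qcons: "qs = q0 # qt" using qs(1) by (cases qs) auto
  have psd: "ps = d # takeWhile P qt" using qcons qs(2) d by (simp add: ps_def P_def)
  have sps: "successively (adj X) ps" "adj X (last ps) (hd rs)"
    using qs(4) qsplit rsne psd successively_append_iff[of "adj X" ps rs] by auto
  have w: "successively (adj X) (c # ps @ [b])"
  proof -
    have pne: "ps \<noteq> []" and hp: "hd ps = d" using psd by auto
    have "successively (adj X) (ps @ [b])" using sps pne by (simp add: successively_append_iff b_def)
    moreover have "hd (ps @ [b]) = d" using pne hp by simp
    ultimately show ?thesis using cd by (simp add: successively_Cons)
  qed
  have dps: "distinct ps" using qs(6) qsplit by (metis distinct_append)
  have disj: "set ps \<inter> T = {}" by (auto simp: ps_def P_def dest: set_takeWhileD)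
  have "tcc X (T \<union> set ps)"
    by (rule ear[OF wf T c bT bc[symmetric] _ dps disj w]) (simp add: psd)
  moreover have "set ps \<subseteq> verts X" using qs(5) qsplit by auto
  ultimately show ?thesis using TV psd by (intro exI[of _ "T \<union> set ps"]) auto
qed

lemma conn_clique: "(\<And>p q. p \<in> S \<Longrightarrow> q \<in> S \<Longrightarrow> p \<noteq> q \<Longrightarrow> adj X p q) \<Longrightarrow> connected_on X S"
  unfolding connected_on_def
proof (intro ballI)
  fix p q assume h: "\<And>p q. p \<in> S \<Longrightarrow> q \<in> S \<Longrightarrow> p \<noteq> q \<Longrightarrow> adj X p q" and pq: "p \<in> S" "q \<in> S"
  show "(p, q) \<in> (edges_on X S)\<^sup>*"
  proof (cases "p = q")
    case True then show ?thesis by simp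
  next
    case False
    then have "(p,q) \<in> edges_on X S" using h pq by (simp add: edges_on_def)
    then show ?thesis by simp
  qed
qed

lemma tcc_pair: "wf_graph X \<Longrightarrow> adj X x y \<Longrightarrow> tcc X {x,y}"
  unfolding tcc_def by (auto intro!: conn_clique simp: wf_graph_def)

lemma make_2conn:
  assumes wf: "wf_graph X" and xy: "x \<noteq> y" and xV: "x \<in> verts X"
    and conn: "(x,y) \<in> (edges_on X (verts X))\<^sup>*"
    and sep: "\<And>z. z \<in> verts X \<Longrightarrow> z \<noteq> x \<Longrightarrow> z \<noteq> y \<Longrightarrow> (x,y) \<in> (edges_on X (verts X - {z}))\<^sup>*"
    and br: "adj X x y \<Longrightarrow> \<exists>w. adj X x w \<and> w \<noteq> y \<and> (w,y) \<in> (edges_on X (verts X - {x}))\<^sup>*"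
  shows "\<exists>T \<subseteq> verts X. x \<in> T \<and> y \<in> T \<and> two_connected_on X T"
proof -
  let ?V = "verts X"
  have fin: "finite ?V" using wf by (simp add: wf_graph_def)
  obtain P where P: "P \<noteq> []" "hd P = x" "last P = y" "successively (adj X) P" "set P \<subseteq> ?V" "distinct P"
    using rtrancl_walk[OF conn xV] by blast
  have P0: "P ! 0 = x" using P by (simp add: hd_conv_nth)
  have Pl: "P ! (length P - 1) = y" using P by (simp add: last_conv_nth)
  have lenP: "length P \<ge> 2"
  proof (rule ccontr)
    assume "\<not> ?thesis"
    moreover have "length P \<noteq> 0" using P(1) by simp
    ultimately have "length P = 1" by linarith
    then show False using P0 Pl xy by simp
  qed
  have claim: "\<exists>T. T \<subseteq> ?V \<and> tcc X T \<and> set (take (Suc j) P) \<subseteq> T" if "1 \<le> j" "j < length P" for j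
    using that
  proof (induction j)
    case 0 then show ?case by simp
  next
    case (Suc j)
    show ?case
    proof (cases "j = 0")
      case True
      have a: "adj X (P!0) (P!1)" using successively_nth[OF P(4)] lenP by simp
      have "take (Suc (Suc 0)) P = [P!0, P!1]" using lenP
        by (cases P; cases "tl P") auto
      then have "set (take (Suc (Suc 0)) P) = {P!0, P!1}" by simp
      moreover have "{P!0, P!1} \<subseteq> ?V"
      proof -
        have "0 < length P" "1 < length P" using lenP by auto
        then have "P!0 \<in> set P" "P!1 \<in> set P" by (meson nth_mem)+
        then show ?thesis using P(5) by auto
      qed
      ultimately show ?thesis using tcc_pair[OF wf a] True by (intro exI[of _ "{P!0, P!1}"]) auto
    next
      case False
      then obtain T where T: "T \<subseteq> ?V" "tcc X T" "set (take (Suc j) P) \<subseteq> T" using Suc by auto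
      have tk: "set (take (Suc (Suc j)) P) = set (take (Suc j) P) \<union> {P ! Suc j}"
        using Suc.prems by (auto simp add: take_Suc_conv_app_nth)
      show ?thesis
      proof (cases "P ! Suc j \<in> T")
        case True
        then show ?thesis using T tk by auto
      next
        case dT: False
        let ?c = "P ! j" and ?d = "P ! Suc j"
        have jl: "j < length P" "Suc j < length P" using Suc.prems by auto
        have cin: "?c \<in> set (take (Suc j) P)" using jl by (simp add: take_Suc_conv_app_nth)
        have cT: "?c \<in> T" using T(3) cin by blast
        have cd: "adj X ?c ?d" using successively_nth[OF P(4) jl(2)] .
        have "P ! j \<noteq> P ! 0" by (subst nth_eq_iff_index_eq[OF P(6)]) (use False jl in auto)
        then have cx: "?c \<noteq> x" using P0 by simp
        have "P ! j \<noteq> P ! (length P - 1)" by (subst nth_eq_iff_index_eq[OF P(6)]) (use jl in auto)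
        then have cy: "?c \<noteq> y" using Pl by simp
        have cV: "?c \<in> ?V" using P(5) jl by auto
        define ds where "ds = drop (Suc j) P"
        have sds: "successively (adj X) ds" using succ_drop[OF P(4)] by (simp add: ds_def)
        have dsne: "ds \<noteq> []" using jl by (simp add: ds_def)
        have cnd: "?c \<notin> set ds"
          using cin set_take_disj_set_drop_if_distinct[OF P(6), of "Suc j" "Suc j"] unfolding ds_def by blast
        have "set ds \<subseteq> ?V - {?c}" using cnd P(5) by (auto simp: ds_def dest: in_set_dropD)
        moreover have "hd ds = ?d" using jl by (simp add: ds_def hd_drop_conv_nth)
        moreover have "last ds = y" using jl P(3) dsne by (simp add: ds_def)
        ultimately have r1: "(?d, y) \<in> (edges_on X (?V - {?c}))\<^sup>*" using walk_rtrancl[OF sds dsne] by simp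
        have r2: "(y, x) \<in> (edges_on X (?V - {?c}))\<^sup>*" using rt_sym[OF wf sep[OF cV cx cy]] .
        have "P ! 0 \<in> set (take (Suc j) P)" using nth_mem[of 0 "take (Suc j) P"] jl by simp
        then have xT: "x \<in> T" using T(3) P0 by auto
        obtain T' where T': "T \<subseteq> T'" "T' \<subseteq> ?V" "tcc X T'" "?d \<in> T'"
          using ear_step[OF wf T(2) T(1) cT dT cd rtrancl_trans[OF r1 r2] xT cx[symmetric]] by blast
        then show ?thesis using T tk by (intro exI[of _ T']) auto
      qed
    qed
  qed
  obtain T where T: "T \<subseteq> ?V" "tcc X T" "set P \<subseteq> T"
  proof -
    have "1 \<le> length P - 1" "length P - 1 < length P" using lenP by auto
    from claim[OF this] show ?thesis using that by auto
  qed
  have xT: "x \<in> T" and yT: "y \<in> T" using T(3) P(1) P(2) P(3) by auto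
  have finT: "finite T" using T(1) fin finite_subset by blast
  have cardP: "length P \<le> card T" using T(3) finT P(6) by (metis card_mono distinct_card)
  show ?thesis
  proof (cases "card T > 2")
    case True
    then show ?thesis using T xT yT by (auto simp: two_connected_on_def tcc_def)
  next
    case False
    then have "length P = 2" using cardP lenP by simp
    then have "adj X x y" using successively_nth[OF P(4), of 0] P0 Pl by simp
    then obtain w where w: "adj X x w" "w \<noteq> y" "(w,y) \<in> (edges_on X (?V - {x}))\<^sup>*" using br by blast
    have wx: "w \<noteq> x" using w(1) wf by (auto simp: wf_graph_def)
    have wT: "w \<notin> T"
    proof
      assume "w \<in> T"
      then have "{x,y,w} \<subseteq> T" using xT yT by auto
      then have "card {x,y,w} \<le> card T" using finT card_mono by blast
      then show False using False xy wx w(2) by simp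
    qed
    obtain T' where T': "T \<subseteq> T'" "T' \<subseteq> ?V" "tcc X T'" "w \<in> T'"
      using ear_step[OF wf T(2) T(1) xT wT w(1) w(3) yT xy[symmetric]] by blast
    have finT': "finite T'" using T'(2) fin finite_subset by blast
    have "{x,y,w} \<subseteq> T'" using T' xT yT by auto
    then have "card {x,y,w} \<le> card T'" using finT' card_mono by blast
    then have "card T' > 2" using xy wx w(2) by simp
    then show ?thesis using T' xT yT by (auto simp: two_connected_on_def tcc_def)
  qed
qed



lemma extend_2cc:
  assumes fin: "finite (verts X)" and TV: "T \<subseteq> verts X" and T: "two_connected_on X T"
  shows "\<exists>S. is_2cc X S \<and> T \<subseteq> S"
proof -
  define C where "C = {S. T \<subseteq> S \<and> S \<subseteq> verts X \<and> two_connected_on X S}"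
  have "C \<subseteq> Pow (verts X)" by (auto simp: C_def)
  then have finC: "finite C" using fin finite_subset by blast
  have TC: "T \<in> C" using TV T by (simp add: C_def)
  define m where "m = Max (card ` C)"
  have "m \<in> card ` C" unfolding m_def using finC TC by (intro Max_in) auto
  then obtain S where S: "S \<in> C" "card S = m" by auto
  have mx: "\<And>U. U \<in> C \<Longrightarrow> card U \<le> card S" using S(2) finC unfolding m_def by simp
  have "is_2cc X S"
    unfolding is_2cc_def
  proof (intro conjI allI impI)
    show "S \<subseteq> verts X" "two_connected_on X S" using S(1) by (auto simp: C_def)
    fix U assume U: "S \<subseteq> U \<and> U \<subseteq> verts X \<and> two_connected_on X U"
    then have "U \<in> C" using S(1) by (auto simp: C_def)
    then have "card U \<le> card S" by (rule mx)
    moreover have "finite U" using U fin finite_subset by blast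
    ultimately show "U = S" using U card_subset_eq by (metis antisym card_mono)
  qed
  then show ?thesis using S(1) by (auto simp: C_def)
qed

lemma S_third:
  assumes "two_connected_on X S" "x \<in> S" "y \<in> S"
  obtains a where "a \<in> S" "a \<noteq> x" "a \<noteq> y"
proof -
  have "\<exists>a\<in>S. a \<noteq> x \<and> a \<noteq> y"
  proof (rule ccontr)
    assume "\<not> ?thesis"
    then have "S \<subseteq> {x,y}" by auto
    then have "card S \<le> card {x,y}" by (rule card_mono[rotated]) simp
    also have "\<dots> \<le> 2" by (simp add: card_insert_le_m1)
    finally show False using assms(1) by (simp add: two_connected_on_def)
  qed
  then show ?thesis using that by blast
qed

lemma S_facts:
  assumes wf: "wf_graph G" and SV: "S \<subseteq> verts G" and S: "two_connected_on G S"
    and x: "x \<in> S" and y: "y \<in> S" and xy: "x \<noteq> y"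
  shows "(x,y) \<in> (edges_on G (verts G))\<^sup>*"
    and "\<And>z. z \<noteq> x \<Longrightarrow> z \<noteq> y \<Longrightarrow> (x,y) \<in> (edges_on G (verts G - {z}))\<^sup>*"
    and "adj G x y \<Longrightarrow> \<exists>w. adj G x w \<and> w \<noteq> y \<and> (w,y) \<in> (edges_on G (verts G - {x}))\<^sup>*"
proof -
  obtain a where a: "a \<in> S" "a \<noteq> x" "a \<noteq> y" using S_third[OF S x y] by blast
  have con: "connected_on G (S - {c})" if "c \<in> S" for c using S that by (simp add: two_connected_on_def)
  have pa: "(x,y) \<in> (edges_on G (S - {a}))\<^sup>*" using con[OF a(1)] x y a by (simp add: connected_on_def)
  show "(x,y) \<in> (edges_on G (verts G))\<^sup>*" using pa edges_mono[of "S - {a}" "verts G"] SV by blast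
  show "(x,y) \<in> (edges_on G (verts G - {z}))\<^sup>*" if "z \<noteq> x" "z \<noteq> y" for z
  proof (cases "z \<in> S")
    case True
    have "(x,y) \<in> (edges_on G (S - {z}))\<^sup>*" using con[OF True] x y that by (simp add: connected_on_def)
    then show ?thesis using edges_mono[of "S - {z}" "verts G - {z}"] SV by blast
  next
    case False
    then show ?thesis using pa edges_mono[of "S - {a}" "verts G - {z}"] SV by blast
  qed
  show "\<exists>w. adj G x w \<and> w \<noteq> y \<and> (w,y) \<in> (edges_on G (verts G - {x}))\<^sup>*" if "adj G x y"
  proof -
    have "(x,a) \<in> (edges_on G (S - {y}))\<^sup>*" using con[OF y] x a xy by (simp add: connected_on_def)
    then obtain w where w: "(x,w) \<in> edges_on G (S - {y})" using a(2)
      by (metis converse_rtranclE)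
    then have wa: "adj G x w" "w \<in> S" "w \<noteq> y" by (auto simp: edges_on_def)
    have wx: "w \<noteq> x" using wa(1) wf by (auto simp: wf_graph_def)
    have "(w,y) \<in> (edges_on G (S - {x}))\<^sup>*" using con[OF x] wa wx y xy by (simp add: connected_on_def)
    then have "(w,y) \<in> (edges_on G (verts G - {x}))\<^sup>*" using edges_mono[of "S - {x}" "verts G - {x}"] SV by blast
    then show ?thesis using wa by blast
  qed
qed



lemma core:
  assumes k: "2 \<le> k" and wfG: "wf_graph G" and wfH: "wf_graph H"
    and ls: "length s = k" and ls': "length s' = k" and e: "eqv G H k s s'"
    and SV: "S \<subseteq> verts G" and S: "two_connected_on G S"
    and xS: "s!0 \<in> S" and yS: "s!1 \<in> S" and xy: "s!0 \<noteq> s!1" and x'V: "s'!0 \<in> verts H"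
  shows "\<exists>T \<subseteq> verts H. s'!0 \<in> T \<and> s'!1 \<in> T \<and> two_connected_on H T"
proof -
  define x where "x = s!0"
  define y where "y = s!1"
  define x' where "x' = s'!0"
  define y' where "y' = s'!1"
  have finG: "finite (verts G)" using wfG by (simp add: wf_graph_def)
  have finH: "finite (verts H)" using wfH by (simp add: wf_graph_def)
  have k01: "0 < k" "1 < k" using k by auto
  have atp01: "(x = y) = (x' = y')" "adj G x y = adj H x' y'"
    using eqv_atp[OF e, of 0 1] ls ls' k01 by (simp_all add: x_def y_def x'_def y'_def)
  have x'y': "x' \<noteq> y'" using atp01 xy by (simp add: x_def y_def)
  have W: "\<And>n. avs G {} n x y = avs H {} n x' y'"
    using eqv_walks[OF k wfG wfH ls ls' e] by (simp add: x_def y_def x'_def y'_def)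
  note Gf = S_facts[OF wfG SV S xS yS xy, folded x_def y_def]
  have A: "(x',y') \<in> (edges_on H (verts H))\<^sup>*"
  proof -
    obtain n where "avs G {} n x y > 0" using rtrancl_avs_pos[OF wfG Gf(1)] by auto
    then have "avs H {} n x' y' > 0" using W by simp
    then show ?thesis using avs_pos_rtrancl[OF wfH, of "{}" n x' y'] by simp
  qed
  have B: "(x',y') \<in> (edges_on H (verts H - {z'}))\<^sup>*" if z': "z' \<in> verts H" "z' \<noteq> x'" "z' \<noteq> y'" for z'
  proof -
    obtain z where z: "z \<in> verts G" "\<And>i. i < k \<Longrightarrow> eqv G H k (s[i:=z]) (s'[i:=z'])"
      using back_move[OF finG finH e z'(1)] by blast
    have e0: "eqv G H k (s[0:=z]) (s'[0:=z'])" and e1: "eqv G H k (s[1:=z]) (s'[1:=z'])" using z(2) k01 by auto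
    have zy: "z \<noteq> y" using eqv_atp(2)[OF e0, of 0 1] ls ls' k01 z'(3) by (simp add: y_def y'_def)
    have zx: "z \<noteq> x" using eqv_atp(2)[OF e1, of 0 1] ls ls' k01 z'(2) by (simp add: x_def x'_def)
    obtain w'' where w'': "w'' \<in> verts H" "\<And>i. i < k \<Longrightarrow> eqv G H k ((s[0:=z])[i:=z]) ((s'[0:=z'])[i:=w''])"
      using forth_move[OF finG finH e0 z(1)] by blast
    have e00: "eqv G H k ((s[0:=z])[1:=z]) ((s'[0:=z'])[1:=w''])" using w''(2) k01 by auto
    have "w'' = z'" using eqv_atp(2)[OF e00, of 0 1] ls ls' k01 by simp
    note e00 = e00[unfolded this]
    have W0: "\<And>n. avs G {} n z y = avs H {} n z' y'"
      using eqv_walks[OF k wfG wfH _ _ e0] ls ls' k01 by (simp add: y_def y'_def)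
    have W1: "\<And>n. avs G {} n x z = avs H {} n x' z'"
      using eqv_walks[OF k wfG wfH _ _ e1] ls ls' k01 by (simp add: x_def x'_def)
    have W00: "\<And>n. avs G {} n z z = avs H {} n z' z'"
      using eqv_walks[OF k wfG wfH _ _ e00] ls ls' k01 by simp
    have AV: "\<And>n. avs G {z} n x y = avs H {z'} n x' y'" by (rule av_transfer[OF W W00 W1 W0])
    have "(x,y) \<in> (edges_on G (verts G - {z}))\<^sup>*" using Gf(2) zx zy by blast
    then obtain n where "avs G {z} n x y > 0" using rtrancl_avs_pos[OF wfG, of x y "verts G - {z}" "{z}"] zy by auto
    then have "avs H {z'} n x' y' > 0" using AV by simp
    then show ?thesis using avs_pos_rtrancl[OF wfH] by auto
  qed
  have C: "\<exists>w'. adj H x' w' \<and> w' \<noteq> y' \<and> (w',y') \<in> (edges_on H (verts H - {x'}))\<^sup>*" if a': "adj H x' y'"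
  proof -
    have "adj G x y" using a' atp01 by simp
    then obtain w where w: "adj G x w" "w \<noteq> y" "(w,y) \<in> (edges_on G (verts G - {x}))\<^sup>*" using Gf(3) by blast
    have wV: "w \<in> verts G" using w(1) wfG by (auto simp: wf_graph_def)
    obtain w' where w': "w' \<in> verts H" "\<And>i. i < k \<Longrightarrow> eqv G H k (s[i:=w]) (s'[i:=w'])"
      using forth_move[OF finG finH e wV] by blast
    have e0: "eqv G H k (s[0:=w]) (s'[0:=w'])" and e1: "eqv G H k (s[1:=w]) (s'[1:=w'])" using w'(2) k01 by auto
    have aw': "adj H x' w'" using eqv_atp(3)[OF e1, of 0 1] ls ls' k01 w(1) by (simp add: x_def x'_def)
    have wy': "w' \<noteq> y'" using eqv_atp(2)[OF e0, of 0 1] ls ls' k01 w(2) by (simp add: y_def y'_def)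
    have xV: "x \<in> verts G" using w(1) wfG by (auto simp: wf_graph_def)
    obtain x'' where x'': "x'' \<in> verts H" "\<And>i. i < k \<Longrightarrow> eqv G H k (s[i:=x]) (s'[i:=x''])"
      using forth_move[OF finG finH e xV] by blast
    have ex: "eqv G H k (s[1:=x]) (s'[1:=x''])" using x''(2) k01 by auto
    have "x'' = x'" using eqv_atp(2)[OF ex, of 0 1] ls ls' k01 by (simp add: x'_def x_def)
    note ex = ex[unfolded this]
    have W0: "\<And>n. avs G {} n w y = avs H {} n w' y'"
      using eqv_walks[OF k wfG wfH _ _ e0] ls ls' k01 by (simp add: y_def y'_def)
    have W1: "\<And>n. avs G {} n w x = avs H {} n w' x'"
      using eqv_walks[OF k wfG wfH _ _ e1] ls ls' k01 walks_sym[OF wfG] walks_sym[OF wfH]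
      by (simp add: x_def x'_def)
    have Wxx: "\<And>n. avs G {} n x x = avs H {} n x' x'"
      using eqv_walks[OF k wfG wfH _ _ ex] ls ls' k01 by (simp add: x_def x'_def)
    have AV: "\<And>n. avs G {x} n w y = avs H {x'} n w' y'" by (rule av_transfer[OF W0 Wxx W1 W])
    have yx: "y \<noteq> x" using xy by (simp add: x_def y_def)
    obtain n where "avs G {x} n w y > 0" using rtrancl_avs_pos[OF wfG w(3), of "{x}"] yx by auto
    then have "avs H {x'} n w' y' > 0" using AV by simp
    then have "(w',y') \<in> (edges_on H (verts H - {x'}))\<^sup>*" using avs_pos_rtrancl[OF wfH] by auto
    then show ?thesis using aw' wy' by blast
  qed
  have "\<exists>T \<subseteq> verts H. x' \<in> T \<and> y' \<in> T \<and> two_connected_on H T"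
    by (rule make_2conn[OF wfH x'y' _ A B C]) (use x'V in \<open>simp_all add: x'_def\<close>)
  then show ?thesis by (simp add: x'_def y'_def)
qed



theorem theorem6:
  fixes G :: "('a, 'c) cgraph" and H :: "('b, 'c) cgraph" and k :: nat
  assumes "k \<ge> 2"
    and "wf_graph G" and "wf_graph H"
    and "\<exists>S. is_2cc G S \<and> u \<in> S \<and> v \<in> S"
    and "u' \<in> verts H" and "v' \<in> verts H"
    and "\<not> (\<exists>S. is_2cc H S \<and> u' \<in> S \<and> v' \<in> S)"
  shows "wl_pair G k u v \<noteq> wl_pair H k u' v'"
proof
  assume eq: "wl_pair G k u v = wl_pair H k u' v'"
  note k = assms(1) and wfG = assms(2) and wfH = assms(3)
  define t where "t = u # replicate (k - 1) v"
  define t' where "t' = u' # replicate (k - 1) v'"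
  have e: "eqv G H k t t'" using eq unfolding eqv_def wl_pair_def wl_stable_def t_def t'_def
    by (metis)
  have finG: "finite (verts G)" using wfG by (simp add: wf_graph_def)
  have finH: "finite (verts H)" using wfH by (simp add: wf_graph_def)
  obtain S where S: "is_2cc G S" "u \<in> S" "v \<in> S" using assms(4) by blast
  have SV: "S \<subseteq> verts G" and Sc: "two_connected_on G S" using S(1) by (auto simp: is_2cc_def)
  have lt: "length t = k" "length t' = k" using k by (simp_all add: t_def t'_def)
  have km: "k - 1 = Suc (k - 2)" using k by simp
  have t01: "t!0 = u" "t!1 = v" "t'!0 = u'" "t'!1 = v'" using k by (simp_all add: t_def t'_def nth_Cons')
  have noT: False if T: "T \<subseteq> verts H" "u' \<in> T" "v' \<in> T" "two_connected_on H T" for T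
  proof -
    obtain S' where "is_2cc H S'" "T \<subseteq> S'" using extend_2cc[OF finH T(1) T(4)] by blast
    then show False using assms(7) T by blast
  qed
  show False
  proof (cases "u = v")
    case False
    have "\<exists>T \<subseteq> verts H. t'!0 \<in> T \<and> t'!1 \<in> T \<and> two_connected_on H T"
      by (rule core[OF k wfG wfH lt e SV Sc]) (use S False assms(5) t01 in simp_all)
    then show False using noT t01 by auto
  next
    case True
    have uv': "u' = v'" using eqv_atp(2)[OF e, of 0 1] lt k t01 True by simp
    obtain w where w: "w \<in> S" "w \<noteq> u" using S_third[OF Sc S(2) S(2)] by blast
    have wV: "w \<in> verts G" using w SV by auto
    obtain w' where w': "w' \<in> verts H" "\<And>i. i < k \<Longrightarrow> eqv G H k (t[i:=w]) (t'[i:=w'])"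
      using forth_move[OF finG finH e wV] by blast
    have e1: "eqv G H k (t[1:=w]) (t'[1:=w'])" using w'(2) k by simp
    have "\<exists>T \<subseteq> verts H. t'[1:=w']!0 \<in> T \<and> t'[1:=w']!1 \<in> T \<and> two_connected_on H T"
      by (rule core[OF k wfG wfH _ _ e1 SV Sc]) (use S w assms(5) t01 lt k in simp_all)
    then obtain T where "T \<subseteq> verts H" "u' \<in> T" "two_connected_on H T" using t01 lt k by auto
    then show False using noT uv' by blast
  qed
qed


end
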